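(* Let $X$ be a finite topological space and $A\subseteq X$. Then $\Psi(a,A)=\Psi(a,\overline{A})$ for all $a\in X$, where $\overline{A}$ is the closure of $A$ in $X$.
   Context: For a finite topological space $X$ and $x\in X$, $U_x$ denotes the minimal open set containing $x$. A nested sequence of open sets around $x$ is a finite sequence $U_0\subsetneq U_1\subsetneq\cdots\subsetneq U_m=X$ of open sets with $U_0=U_x$ such that for each $j$ there is no open set $V$ with $U_j\subsetneq V\subsetneq U_{j+1}$. The furtherness function $\Psi:X\times X\to\{0,1,\dots,|X|-1\}$ is defined by: $\Psi(x,y)$ is the smallest integer $k\ge 0$ such that there exists a nested sequence $(U_j)_{j\ge0}$ of open sets around $x$ with $y\in U_k$. For $a\in X$ and $B\subseteq X$, $\Psi(a,B)=\min_{b\in B}\Psi(a,b)$, with $\Psi(a,\emptyset)=\infty$. *)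

theory Defs
  imports "HOL-Analysis.Analysis" "HOL-Library.Extended_Nat"
begin

definition min_open :: "'a topology \<Rightarrow> 'a \<Rightarrow> 'a set" where
  "min_open T x = \<Inter> {U. openin T U \<and> x \<in> U}"

definition nested_seq :: "'a topology \<Rightarrow> 'a \<Rightarrow> (nat \<Rightarrow> 'a set) \<Rightarrow> nat \<Rightarrow> bool" where
  "nested_seq T x U m \<longleftrightarrow>
     U 0 = min_open T x \<and> U m = topspace T \<and>
     (\<forall>j\<le>m. openin T (U j)) \<and>
     (\<forall>j<m. U j \<subset> U (Suc j) \<and>
        \<not> (\<exists>V. openin T V \<and> U j \<subset> V \<and> V \<subset> U (Suc j)))"

definition furtherness :: "'a topology \<Rightarrow> 'a \<Rightarrow> 'a \<Rightarrow> nat" where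
  "furtherness T x y = (LEAST k. \<exists>U m. nested_seq T x U m \<and> k \<le> m \<and> y \<in> U k)"

text \<open>Furtherness to a set; infinity for the empty set.\<close>
definition furtherness_set :: "'a topology \<Rightarrow> 'a \<Rightarrow> 'a set \<Rightarrow> enat" where
  "furtherness_set T a B = (INF b\<in>B. enat (furtherness T a b))"

end

theory Submission
  imports Defs
begin

lemma key:
  assumes "b \<in> T closure_of A"
  shows "\<exists>c\<in>A. furtherness T a c \<le> furtherness T a b"
proof (cases "\<exists>U m. nested_seq T a U m")
  case True
  then obtain U m where nm: "nested_seq T a U m" by blast
  have bt: "b \<in> topspace T" using assms by (simp add: in_closure_of)
  let ?P = "\<lambda>y k. \<exists>U m. nested_seq T a U m \<and> k \<le> m \<and> y \<in> U k"
  have "?P b m" using nm bt unfolding nested_seq_def by auto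
  hence "?P b (furtherness T a b)" unfolding furtherness_def by (rule LeastI)
  then obtain V n where V: "nested_seq T a V n" "furtherness T a b \<le> n"
    "b \<in> V (furtherness T a b)" by blast
  have "openin T (V (furtherness T a b))" using V unfolding nested_seq_def by auto
  then obtain c where c: "c \<in> A" "c \<in> V (furtherness T a b)"
    using assms V(3) unfolding in_closure_of by blast
  have "?P c (furtherness T a b)" using V c by blast
  hence "furtherness T a c \<le> furtherness T a b" unfolding furtherness_def by (rule Least_le)
  with c show ?thesis by blast
next
  case False
  hence eq: "\<And>y. furtherness T a y = (LEAST k. False)" unfolding furtherness_def by simp
  have "A \<noteq> {}" using assms by (metis closure_of_empty empty_iff)
  then obtain c where "c \<in> A" by blast
  moreover have "furtherness T a c \<le> furtherness T a b" by (simp only: eq order_refl)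
  ultimately show ?thesis by blast
qed

theorem mainTheorem17:
  fixes T :: "'a topology" and A :: "'a set" and a :: 'a
  assumes "finite (topspace T)" and "A \<subseteq> topspace T" and "a \<in> topspace T"
  shows "furtherness_set T a A = furtherness_set T a (T closure_of A)"
proof (rule antisym)
  show "furtherness_set T a (T closure_of A) \<le> furtherness_set T a A"
    unfolding furtherness_set_def
    by (rule INF_superset_mono) (use assms(2) closure_of_subset[of A T] in auto)
  show "furtherness_set T a A \<le> furtherness_set T a (T closure_of A)"
    unfolding furtherness_set_def
  proof (rule INF_greatest)
    fix b assume "b \<in> T closure_of A"
    show "(INF x\<in>A. enat (furtherness T a x)) \<le> enat (furtherness T a b)"
    proof -
      obtain c where c: "c \<in> A" "furtherness T a c \<le> furtherness T a b" using key[OF \<open>b \<in> T closure_of A\<close>, of a] by blast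
      have "(INF x\<in>A. enat (furtherness T a x)) \<le> enat (furtherness T a c)"
        using c(1) by (rule INF_lower)
      also have "enat (furtherness T a c) \<le> enat (furtherness T a b)" using c(2) by simp
      finally show ?thesis .
    qed
  qed
qed

end
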